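(* Let $\lambda>0$, $p\in(1,\infty)$, and let $X$ be a Banach space having a closed linear subspace $Y$ of finite codimension such that $Y$ has property $\lambda$-HFC$_{p,d}$ (resp. $\lambda$-HIC$_{p,d}$). Then for every $\varepsilon>0$, $X$ has property $(\lambda+\varepsilon)$-HFC$_{p,d}$ (resp. $(\lambda+\varepsilon)$-HIC$_{p,d}$).
   Context: For $\mathbb{M}\subset\mathbb{N}$ infinite and $k\in\mathbb{N}$, $[\mathbb{M}]^k=\{\overline{n}=(n_1,\dots,n_k)\in\mathbb{M}^k: n_1<\cdots<n_k\}$; $[\mathbb{N}]^\omega$ denotes the set of infinite subsets of $\mathbb{N}$. Set $I_k(\mathbb{M})=\{(\overline{n},\overline{m})\in[\mathbb{M}]^k\times[\mathbb{M}]^k: n_1<m_1<n_2<m_2<\cdots<n_k<m_k\}$ and, for $1\le j\le k$, $H_j(\mathbb{M})=\{(\overline{n},\overline{m})\in[\mathbb{M}]^k\times[\mathbb{M}]^k: n_i=m_i \text{ for all } i\neq j,\ n_j<m_j\}$. For a map $f:[\mathbb{N}]^k\to (X,d)$, $\operatorname{Lip}_j(f)=\sup_{(\overline{n},\overline{m})\in H_j(\mathbb{N})} d(f(\overline{n}),f(\overline{m}))$. A metric space $(X,d)$ has property $\lambda$-HFC$_{p,d}$ (resp. $\lambda$-HIC$_{p,d}$), for $\lambda>0$, $p\in(1,\infty)$, if for every $k\in\mathbb{N}$ and every bounded function $f:[\mathbb{N}]^k\to X$ there exists $\mathbb{M}\in[\mathbb{N}]^\omega$ such that $d(f(\overline{n}),f(\overline{m}))\le\lambda\left(\sum_{j=1}^k\operatorname{Lip}_j(f)^p\right)^{1/p}$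 for all $\overline{n},\overline{m}\in[\mathbb{M}]^k$ (resp. for all $(\overline{n},\overline{m})\in I_k(\mathbb{M})$). *)

theory Defs
  imports "HOL-Analysis.Analysis"
begin

definition incr_tuples :: "nat set \<Rightarrow> nat \<Rightarrow> nat list set" where
  "incr_tuples M k = {n. length n = k \<and> set n \<subseteq> M \<and> sorted_wrt (<) n}"

definition interlaced :: "nat set \<Rightarrow> nat \<Rightarrow> (nat list \<times> nat list) set" where
  "interlaced M k = {(n, m). n \<in> incr_tuples M k \<and> m \<in> incr_tuples M k \<and>
      (\<forall>i<k. n ! i < m ! i) \<and> (\<forall>i. Suc i < k \<longrightarrow> m ! i < n ! Suc i)}"

text \<open>H_j(M) (0-indexed j < k): pairs differing only at coordinate j, with n_j < m_j.\<close>
definition Hpairs :: "nat set \<Rightarrow> nat \<Rightarrow> nat \<Rightarrow> (nat list \<times> nat list) set" where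
  "Hpairs M k j = {(n, m). n \<in> incr_tuples M k \<and> m \<in> incr_tuples M k \<and>
      (\<forall>i<k. i \<noteq> j \<longrightarrow> n ! i = m ! i) \<and> n ! j < m ! j}"

definition Lipj :: "(nat list \<Rightarrow> 'a::metric_space) \<Rightarrow> nat \<Rightarrow> nat \<Rightarrow> real" where
  "Lipj f k j = (SUP nm \<in> Hpairs UNIV k j. dist (f (fst nm)) (f (snd nm)))"

definition HFC :: "real \<Rightarrow> real \<Rightarrow> 'a::metric_space set \<Rightarrow> bool" where
  "HFC lam p S \<longleftrightarrow> (\<forall>k. \<forall>f :: nat list \<Rightarrow> 'a.
     (f ` incr_tuples UNIV k \<subseteq> S \<and> bounded (f ` incr_tuples UNIV k)) \<longrightarrow>
     (\<exists>M. infinite M \<and> (\<forall>n \<in> incr_tuples M k. \<forall>m \<in> incr_tuples M k.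
        dist (f n) (f m) \<le> lam * (\<Sum>j<k. Lipj f k j powr p) powr (1 / p))))"

definition HIC :: "real \<Rightarrow> real \<Rightarrow> 'a::metric_space set \<Rightarrow> bool" where
  "HIC lam p S \<longleftrightarrow> (\<forall>k. \<forall>f :: nat list \<Rightarrow> 'a.
     (f ` incr_tuples UNIV k \<subseteq> S \<and> bounded (f ` incr_tuples UNIV k)) \<longrightarrow>
     (\<exists>M. infinite M \<and> (\<forall>(n, m) \<in> interlaced M k.
        dist (f n) (f m) \<le> lam * (\<Sum>j<k. Lipj f k j powr p) powr (1 / p))))"

end

theory Submission
  imports Defs "HOL-Library.Ramsey"
begin

lemma incr_tuples_map:
  assumes "strict_mono e" "n \<in> incr_tuples A k"
  shows "map e n \<in> incr_tuples (e ` A) k"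
  using assms unfolding incr_tuples_def
  by (auto simp: sorted_wrt_map strict_mono_less elim!: sorted_wrt_mono_rel[rotated])

lemma incr_tuples_map_UNIV:
  assumes "strict_mono e" "n \<in> incr_tuples UNIV k"
  shows "map e n \<in> incr_tuples UNIV k"
  using incr_tuples_map[OF assms] unfolding incr_tuples_def by auto

lemma incr_tuples_pre:
  assumes "strict_mono e" "n \<in> incr_tuples (e ` A) k"
  shows "\<exists>n'. n = map e n' \<and> n' \<in> incr_tuples A k"
proof -
  have "\<forall>y\<in>set n. \<exists>x. y = e x" using assms(2) unfolding incr_tuples_def by auto
  then obtain n' where n': "n = map e n'" using ex_map_conv by metis
  have inj: "inj e" using assms(1) strict_mono_imp_inj_on by blast
  have "set n' \<subseteq> A"
  proof
    fix x assume "x \<in> set n'"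
    then have "e x \<in> e ` A" using assms(2) n' unfolding incr_tuples_def by auto
    then show "x \<in> A" using inj by (auto dest: injD)
  qed
  moreover have "sorted_wrt (<) n'" using assms n' unfolding incr_tuples_def
    by (auto simp: sorted_wrt_map strict_mono_less)
  ultimately show ?thesis using n' assms(2) unfolding incr_tuples_def by auto
qed

lemma Hpairs_map:
  assumes "strict_mono e" "(n, m) \<in> Hpairs UNIV k j" "j < k"
  shows "(map e n, map e m) \<in> Hpairs UNIV k j"
  using assms incr_tuples_map_UNIV[OF assms(1)] unfolding Hpairs_def
  by (auto simp: incr_tuples_def strict_mono_less)

lemma interlaced_pre:
  assumes "strict_mono e" "(n, m) \<in> interlaced (e ` A) k"
  shows "\<exists>n' m'. n = map e n' \<and> m = map e m' \<and> (n', m') \<in> interlaced A k"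
proof -
  from assms(2) have n: "n \<in> incr_tuples (e ` A) k" and m: "m \<in> incr_tuples (e ` A) k"
    unfolding interlaced_def by auto
  obtain n' where n': "n = map e n'" "n' \<in> incr_tuples A k" using incr_tuples_pre[OF assms(1) n] by blast
  obtain m' where m': "m = map e m'" "m' \<in> incr_tuples A k" using incr_tuples_pre[OF assms(1) m] by blast
  have ln: "length n' = k" "length m' = k" using n' m' unfolding incr_tuples_def by auto
  have "(n', m') \<in> interlaced A k"
    using assms(2) n' m' ln unfolding interlaced_def by (auto simp: strict_mono_less[OF assms(1)])
  then show ?thesis using n' m' by blast
qed

definition tt :: "nat list \<Rightarrow> nat \<Rightarrow> nat \<Rightarrow> nat \<Rightarrow> nat list" where
  "tt n N k i = take i n @ [N+i..<N+k]"

lemma tt_in: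
  assumes "n \<in> incr_tuples UNIV k" "\<forall>x\<in>set n. x < N" "i \<le> k"
  shows "tt n N k i \<in> incr_tuples UNIV k"
proof -
  have l: "length n = k" and s: "sorted_wrt (<) n" using assms(1) unfolding incr_tuples_def by auto
  have "sorted_wrt (<) (take i n)" using s by (simp add: sorted_wrt_take)
  moreover have "\<forall>x\<in>set (take i n). \<forall>y\<in>set [N+i..<N+k]. x < y"
    using assms(2) by (fastforce dest: in_set_takeD)
  ultimately have "sorted_wrt (<) (tt n N k i)" unfolding tt_def
    by (simp add: sorted_wrt_append)
  moreover have "length (tt n N k i) = k" unfolding tt_def using l assms(3) by simp
  ultimately show ?thesis unfolding incr_tuples_def by auto
qed

lemma tt_nth:
  assumes "length n = k" "i \<le> k" "j < k"
  shows "tt n N k i ! j = (if j < i then n ! j else N + j)"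
  using assms unfolding tt_def by (auto simp: nth_append min_def)

lemma tt_H:
  assumes "n \<in> incr_tuples UNIV k" "\<forall>x\<in>set n. x < N" "i < k"
  shows "(tt n N k (Suc i), tt n N k i) \<in> Hpairs UNIV k i"
proof -
  have l: "length n = k" using assms(1) unfolding incr_tuples_def by auto
  have "n ! i < N" using assms(2,3) l by auto
  then show ?thesis unfolding Hpairs_def using tt_in[OF assms(1,2)] assms(3) l
    by (auto simp: tt_nth)
qed

lemma tt_k: "length n = k \<Longrightarrow> tt n N k k = n"
  unfolding tt_def by simp

lemma tt_0: "tt n N k 0 = [N..<N+k]"
  unfolding tt_def by simp

lemma bounded_dist_bdd:
  fixes f :: "nat list \<Rightarrow> 'a::real_normed_vector"
  assumes "bounded (f ` incr_tuples UNIV k)"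
  shows "\<exists>B. \<forall>a\<in>incr_tuples UNIV k. \<forall>b\<in>incr_tuples UNIV k. dist (f a) (f b) \<le> B"
proof -
  obtain B where B: "\<forall>x\<in>f ` incr_tuples UNIV k. norm x \<le> B" using assms bounded_iff by metis
  have "dist (f a) (f b) \<le> 2 * B" if "a\<in>incr_tuples UNIV k" "b\<in>incr_tuples UNIV k" for a b
  proof -
    have "dist (f a) (f b) \<le> norm (f a) + norm (f b)" by (simp add: dist_norm norm_triangle_ineq4)
    moreover have "norm (f a) \<le> B" "norm (f b) \<le> B" using B that by auto
    ultimately show ?thesis by linarith
  qed
  then show ?thesis by blast
qed

lemma Lip_upper:
  fixes f :: "nat list \<Rightarrow> 'a::real_normed_vector"
  assumes "bounded (f ` incr_tuples UNIV k)" "(a, b) \<in> Hpairs UNIV k j"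
  shows "dist (f a) (f b) \<le> Lipj f k j"
proof -
  obtain B where B: "\<forall>a\<in>incr_tuples UNIV k. \<forall>b\<in>incr_tuples UNIV k. dist (f a) (f b) \<le> B"
    using bounded_dist_bdd[OF assms(1)] by blast
  have "bdd_above ((\<lambda>nm. dist (f (fst nm)) (f (snd nm))) ` Hpairs UNIV k j)"
    unfolding bdd_above_def using B unfolding Hpairs_def by fastforce
  from cSUP_upper[OF assms(2) this] show ?thesis unfolding Lipj_def by simp
qed

lemma Hpairs_ne: "j < k \<Longrightarrow> Hpairs UNIV k j \<noteq> {}"
proof -
  assume j: "j < k"
  have "[0..<k] \<in> incr_tuples UNIV k" unfolding incr_tuples_def by auto
  from tt_H[OF this _ j, of k] show ?thesis by auto
qed

lemma Lip_nonneg: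
  fixes f :: "nat list \<Rightarrow> 'a::real_normed_vector"
  assumes "bounded (f ` incr_tuples UNIV k)" "j < k"
  shows "0 \<le> Lipj f k j"
proof -
  obtain a b where "(a, b) \<in> Hpairs UNIV k j" using Hpairs_ne[OF assms(2)] by auto
  from Lip_upper[OF assms(1) this] show ?thesis by (meson dual_order.trans zero_le_dist)
qed

lemma Lip_le:
  fixes f :: "nat list \<Rightarrow> 'a::metric_space"
  assumes "j < k" "\<And>a b. (a, b) \<in> Hpairs UNIV k j \<Longrightarrow> dist (f a) (f b) \<le> c"
  shows "Lipj f k j \<le> c"
  unfolding Lipj_def using Hpairs_ne[OF assms(1)] assms(2)
  by (intro cSUP_least) auto

lemma path_bound:
  fixes f :: "nat list \<Rightarrow> 'a::real_normed_vector"
  assumes "bounded (f ` incr_tuples UNIV k)" "n \<in> incr_tuples UNIV k" "\<forall>x\<in>set n. x < N"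
  shows "d \<le> k \<Longrightarrow> dist (f n) (f (tt n N k (k - d))) \<le> (\<Sum>j\<in>{k-d..<k}. Lipj f k j)"
proof (induction d)
  case 0
  have "length n = k" using assms(2) unfolding incr_tuples_def by auto
  then show ?case by (simp add: tt_k)
next
  case (Suc d)
  define i where "i = k - Suc d"
  have i: "i < k" "Suc i = k - d" using Suc.prems unfolding i_def by auto
  have "dist (f n) (f (tt n N k i)) \<le> dist (f n) (f (tt n N k (Suc i))) + dist (f (tt n N k (Suc i))) (f (tt n N k i))"
    by (rule dist_triangle)
  also have "\<dots> \<le> (\<Sum>j\<in>{Suc i..<k}. Lipj f k j) + Lipj f k i"
    using Suc.IH Suc.prems i Lip_upper[OF assms(1) tt_H[OF assms(2,3) i(1)]] by auto
  also have "\<dots> = (\<Sum>j\<in>{i..<k}. Lipj f k j)"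
    using i(1) by (simp add: sum.atLeast_Suc_lessThan)
  finally show ?case unfolding i_def .
qed

lemma path_bound2:
  fixes f :: "nat list \<Rightarrow> 'a::real_normed_vector"
  assumes "bounded (f ` incr_tuples UNIV k)" "n \<in> incr_tuples UNIV k" "m \<in> incr_tuples UNIV k"
  shows "dist (f n) (f m) \<le> 2 * (\<Sum>j<k. Lipj f k j)"
proof -
  define N where "N = Suc (Max (set n \<union> set m))"
  have N: "\<forall>x\<in>set n. x < N" "\<forall>x\<in>set m. x < N"
    unfolding N_def by (auto simp: le_imp_less_Suc)
  have 1: "dist (f n) (f [N..<N+k]) \<le> (\<Sum>j<k. Lipj f k j)"
    using path_bound[OF assms(1,2) N(1), of k] by (simp add: tt_0 atLeast0LessThan)
  have 2: "dist (f m) (f [N..<N+k]) \<le> (\<Sum>j<k. Lipj f k j)"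
    using path_bound[OF assms(1,3) N(2), of k] by (simp add: tt_0 atLeast0LessThan)
  have "dist (f n) (f m) \<le> dist (f n) (f [N..<N+k]) + dist (f m) (f [N..<N+k])"
    by (metis dist_commute dist_triangle)
  then show ?thesis using 1 2 by linarith
qed

lemma add_line:
  fixes Y :: "'a::real_normed_vector set"
  assumes "subspace Y" "closed Y" "v \<notin> Y"
  shows "\<exists>d>0. \<forall>y\<in>Y. \<forall>t. \<bar>t\<bar> * d \<le> norm (y + t *\<^sub>R v)"
proof -
  have ne: "Y \<noteq> {}" using assms(1) subspace_0 by blast
  define d where "d = infdist v Y"
  have d: "d > 0" unfolding d_def using infdist_pos_not_in_closed[OF assms(2) ne assms(3)] .
  have "\<bar>t\<bar> * d \<le> norm (y + t *\<^sub>R v)" if y: "y \<in> Y" for y t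
  proof (cases "t = 0")
    case True then show ?thesis by simp
  next
    case False
    have yy: "- ((1/t) *\<^sub>R y) \<in> Y" using y assms(1) by (simp add: subspace_neg subspace_scale)
    have "d \<le> dist v (- ((1/t) *\<^sub>R y))" unfolding d_def by (rule infdist_le[OF yy])
    also have "\<dots> = norm (v + (1/t) *\<^sub>R y)" by (simp add: dist_norm)
    finally have 1: "d \<le> norm (v + (1/t) *\<^sub>R y)" .
    have "y + t *\<^sub>R v = t *\<^sub>R (v + (1/t) *\<^sub>R y)" using False by (simp add: algebra_simps)
    then have "norm (y + t *\<^sub>R v) = \<bar>t\<bar> * norm (v + (1/t) *\<^sub>R y)" by simp
    then show ?thesis using 1 by (simp add: mult_left_mono)
  qed
  then show ?thesis using d by blast
qed

lemma span_insert_subspace: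
  assumes "subspace Y"
  shows "span (insert v Y) = {x. \<exists>k. x - k *\<^sub>R v \<in> Y}"
  using assms by (simp add: span_insert span_eq_iff[THEN iffD2])

lemma closed_add_line:
  fixes Y :: "'a::real_normed_vector set"
  assumes "subspace Y" "closed Y"
  shows "closed (span (insert v Y))"
proof (cases "v \<in> Y")
  case True
  then have "span (insert v Y) = Y" using assms(1)
    by (metis span_eq_iff span_redundant)
  then show ?thesis using assms(2) by simp
next
  case False
  obtain d where d: "d > 0" "\<forall>y\<in>Y. \<forall>t. \<bar>t\<bar> * d \<le> norm (y + t *\<^sub>R v)"
    using add_line[OF assms False] by blast
  show ?thesis unfolding span_insert_subspace[OF assms(1)] closed_sequential_limits
  proof (intro allI impI, elim conjE)
    fix x l assume xs: "\<forall>n. x n \<in> {x. \<exists>k. x - k *\<^sub>R v \<in> Y}" and lim: "x \<longlonglongrightarrow> l"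
    obtain t where t: "\<And>n. x n - t n *\<^sub>R v \<in> Y" using xs by (simp) metis
    have key: "\<bar>t m - t n\<bar> * d \<le> norm (x m - x n)" for m n
    proof -
      have "(x m - t m *\<^sub>R v) - (x n - t n *\<^sub>R v) \<in> Y" using t assms(1) by (simp add: subspace_diff)
      from d(2)[rule_format, OF this, of "t m - t n"] show ?thesis
        by (simp add: algebra_simps)
    qed
    have "Cauchy x" using lim by (rule LIMSEQ_imp_Cauchy)
    have "Cauchy t"
    proof (rule CauchyI)
      fix e :: real assume e: "e > 0"
      then obtain M where M: "\<forall>m\<ge>M. \<forall>n\<ge>M. norm (x m - x n) < e * d"
        using CauchyD[OF \<open>Cauchy x\<close>, of "e * d"] d(1) by auto
      have "\<forall>m\<ge>M. \<forall>n\<ge>M. norm (t m - t n) < e"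
      proof (intro allI impI)
        fix m n assume "m \<ge> M" "n \<ge> M"
        then have "\<bar>t m - t n\<bar> * d < e * d" using key[of m n] M by (meson le_less_trans)
        then show "norm (t m - t n) < e" using d(1) by simp
      qed
      then show "\<exists>M. \<forall>m\<ge>M. \<forall>n\<ge>M. norm (t m - t n) < e" by blast
    qed
    then obtain T where T: "t \<longlonglongrightarrow> T" using Cauchy_convergent_iff convergent_def by blast
    have "(\<lambda>n. x n - t n *\<^sub>R v) \<longlonglongrightarrow> l - T *\<^sub>R v"
      by (intro tendsto_intros lim T)
    then have "l - T *\<^sub>R v \<in> Y" using closed_sequentially[OF assms(2), of "\<lambda>n. x n - t n *\<^sub>R v"] t by blast
    then show "l \<in> {x. \<exists>k. x - k *\<^sub>R v \<in> Y}" by blast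
  qed
qed

lemma decomp:
  fixes Y :: "'a::real_normed_vector set"
  assumes "finite F" "subspace Y" "closed Y" "span (Y \<union> F) = UNIV"
  shows "\<exists>C\<ge>0. \<forall>x. \<exists>c. x - (\<Sum>u\<in>F. c u *\<^sub>R u) \<in> Y \<and> (\<forall>u\<in>F. \<bar>c u\<bar> \<le> C * norm x)"
  using assms(1,2,3,4)
proof (induction F arbitrary: Y rule: finite_induct)
  case empty
  then have "Y = UNIV" by (metis span_eq_iff sup_bot.right_neutral)
  then show ?case by auto
next
  case (insert v F)
  define Y' where "Y' = span (insert v Y)"
  have sY': "subspace Y'" unfolding Y'_def by (rule subspace_span)
  have cY': "closed Y'" unfolding Y'_def using closed_add_line[OF insert.prems(1,2)] .
  have "Y \<union> insert v F \<subseteq> Y' \<union> F" unfolding Y'_def using span_superset by fastforce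
  then have "span (Y \<union> insert v F) \<subseteq> span (Y' \<union> F)" by (rule span_mono)
  then have sp: "span (Y' \<union> F) = UNIV" using insert.prems(3) by auto
  obtain C where C: "C \<ge> 0" "\<forall>x. \<exists>c. x - (\<Sum>u\<in>F. c u *\<^sub>R u) \<in> Y' \<and> (\<forall>u\<in>F. \<bar>c u\<bar> \<le> C * norm x)"
    using insert.IH[OF sY' cY' sp] by blast
  have "\<exists>D\<ge>0. \<forall>y\<in>Y'. \<exists>t. y - t *\<^sub>R v \<in> Y \<and> \<bar>t\<bar> \<le> D * norm y"
  proof (cases "v \<in> Y")
    case True
    then have "Y' = Y" unfolding Y'_def using insert.prems(1)
      by (metis span_eq_iff span_redundant)
    then show ?thesis by (intro exI[of _ 0]) (auto intro!: exI[of _ 0])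
  next
    case False
    obtain d where d: "d > 0" "\<forall>y\<in>Y. \<forall>t. \<bar>t\<bar> * d \<le> norm (y + t *\<^sub>R v)"
      using add_line[OF insert.prems(1,2) False] by blast
    have "\<exists>t. y - t *\<^sub>R v \<in> Y \<and> \<bar>t\<bar> \<le> (1/d) * norm y" if yY: "y \<in> Y'" for y
    proof -
      obtain t where t: "y - t *\<^sub>R v \<in> Y" using yY unfolding Y'_def span_insert_subspace[OF insert.prems(1)] by blast
      have "\<bar>t\<bar> * d \<le> norm y" using d(2)[rule_format, OF t, of t] by simp
      then have "\<bar>t\<bar> \<le> (1/d) * norm y" using d(1) by (simp add: field_simps)
      then show ?thesis using t by blast
    qed
    then show ?thesis using d(1) by (intro exI[of _ "1/d"]) auto
  qed
  then obtain D where D: "D \<ge> 0" "\<forall>y\<in>Y'. \<exists>t. y - t *\<^sub>R v \<in> Y \<and> \<bar>t\<bar> \<le> D * norm y" by blast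
  define S where "S = (\<Sum>u\<in>F. norm u)"
  have S: "S \<ge> 0" unfolding S_def by (simp add: sum_nonneg)
  define C' where "C' = max C (D * (1 + C * S))"
  have C': "C' \<ge> 0" unfolding C'_def using C(1) by simp
  have "\<exists>c. x - (\<Sum>u\<in>insert v F. c u *\<^sub>R u) \<in> Y \<and> (\<forall>u\<in>insert v F. \<bar>c u\<bar> \<le> C' * norm x)" for x
  proof -
    obtain c where c: "x - (\<Sum>u\<in>F. c u *\<^sub>R u) \<in> Y'" "\<forall>u\<in>F. \<bar>c u\<bar> \<le> C * norm x" using C(2) by blast
    define y where "y = x - (\<Sum>u\<in>F. c u *\<^sub>R u)"
    obtain t where t: "y - t *\<^sub>R v \<in> Y" "\<bar>t\<bar> \<le> D * norm y" using D(2) c(1) unfolding y_def by blast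
    have "norm (\<Sum>u\<in>F. c u *\<^sub>R u) \<le> (\<Sum>u\<in>F. norm (c u *\<^sub>R u))" by (rule norm_sum)
    also have "\<dots> \<le> (\<Sum>u\<in>F. C * norm x * norm u)"
      using c(2) by (intro sum_mono) (simp add: mult_right_mono)
    also have "\<dots> = C * norm x * S" unfolding S_def by (simp add: sum_distrib_left)
    finally have "norm y \<le> norm x + C * norm x * S" unfolding y_def
      by (meson add_left_mono norm_triangle_ineq4 order_trans)
    then have "\<bar>t\<bar> \<le> D * (norm x + C * norm x * S)" using t(2) D(1)
      by (meson mult_left_mono order_trans)
    also have "\<dots> = D * (1 + C * S) * norm x" by (simp add: algebra_simps)
    also have "\<dots> \<le> C' * norm x" unfolding C'_def by (simp add: mult_right_mono)
    finally have tb: "\<bar>t\<bar> \<le> C' * norm x" .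
    define c' where "c' = c(v := t)"
    have e1: "(\<Sum>u\<in>F. c' u *\<^sub>R u) = (\<Sum>u\<in>F. c u *\<^sub>R u)"
      using insert.hyps unfolding c'_def by (intro sum.cong) auto
    have "(\<Sum>u\<in>insert v F. c' u *\<^sub>R u) = c' v *\<^sub>R v + (\<Sum>u\<in>F. c' u *\<^sub>R u)"
      by (rule sum.insert[OF insert.hyps(1,2)])
    then have "(\<Sum>u\<in>insert v F. c' u *\<^sub>R u) = t *\<^sub>R v + (\<Sum>u\<in>F. c u *\<^sub>R u)"
      using e1 unfolding c'_def by simp
    then have "x - (\<Sum>u\<in>insert v F. c' u *\<^sub>R u) = y - t *\<^sub>R v" unfolding y_def by simp
    moreover have "\<forall>u\<in>insert v F. \<bar>c' u\<bar> \<le> C' * norm x"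
    proof
      fix u assume "u \<in> insert v F"
      then show "\<bar>c' u\<bar> \<le> C' * norm x"
      proof
        assume "u = v" then show ?thesis using tb unfolding c'_def by simp
      next
        assume u: "u \<in> F"
        then have "u \<noteq> v" using insert.hyps by auto
        then have "\<bar>c' u\<bar> = \<bar>c u\<bar>" unfolding c'_def by simp
        also have "\<dots> \<le> C * norm x" using c(2) u by blast
        also have "\<dots> \<le> C' * norm x" unfolding C'_def by (simp add: mult_right_mono)
        finally show ?thesis .
      qed
    qed
    ultimately show ?thesis using t(1) by metis
  qed
  then show ?case using C' by blast
qed

lemma sorted_list_of_set_tuple:
  assumes "a \<in> incr_tuples M k"
  shows "sorted_list_of_set (set a) = a" "finite (set a)" "card (set a) = k" "set a \<subseteq> M"
proof -
  have s: "sorted_wrt (<) a" and l: "length a = k" and sub: "set a \<subseteq> M"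
    using assms unfolding incr_tuples_def by auto
  show "sorted_list_of_set (set a) = a"
    using s by (intro strict_sorted_equal) auto
  show "finite (set a)" by simp
  have "distinct a" using s by (simp add: strict_sorted_iff)
  then show "card (set a) = k" using l by (simp add: distinct_card)
  show "set a \<subseteq> M" by (rule sub)
qed

lemma tuple_of_set:
  assumes "finite X" "card X = k"
  shows "sorted_list_of_set X \<in> incr_tuples UNIV k"
  using assms unfolding incr_tuples_def by simp

lemma ramsey_multi:
  assumes "finite F" "infinite Z" "\<forall>v\<in>F. \<forall>n\<in>incr_tuples UNIV k. Q v n < (s::nat)"
  shows "\<exists>M\<subseteq>Z. infinite M \<and> (\<forall>v\<in>F. \<forall>a\<in>incr_tuples M k. \<forall>b\<in>incr_tuples M k. Q v a = Q v b)"
  using assms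
proof (induction F arbitrary: Z rule: finite_induct)
  case empty
  then show ?case by auto
next
  case (insert v F)
  have h: "\<forall>u\<in>F. \<forall>n\<in>incr_tuples UNIV k. Q u n < s" using insert.prems(2) by simp
  have qv: "\<forall>n\<in>incr_tuples UNIV k. Q v n < s" using insert.prems(2) by simp
  obtain M1 where M1: "M1 \<subseteq> Z" "infinite M1"
    "\<forall>u\<in>F. \<forall>a\<in>incr_tuples M1 k. \<forall>b\<in>incr_tuples M1 k. Q u a = Q u b"
    using insert.IH[OF insert.prems(1) h] by metis
  have col: "\<forall>X. X \<subseteq> M1 \<and> finite X \<and> card X = k \<longrightarrow> Q v (sorted_list_of_set X) < s"
  proof (intro allI impI)
    fix X assume "X \<subseteq> M1 \<and> finite X \<and> card X = k"
    then have "sorted_list_of_set X \<in> incr_tuples UNIV k" using tuple_of_set by blast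
    then show "Q v (sorted_list_of_set X) < s" using qv by blast
  qed
  have R: "\<exists>Y t. Y \<subseteq> M1 \<and> infinite Y \<and> t < s \<and>
      (\<forall>X. X \<subseteq> Y \<and> finite X \<and> card X = k \<longrightarrow> Q v (sorted_list_of_set X) = t)"
    by (rule Ramsey[OF M1(2) col])
  then obtain M2 t where M2: "M2 \<subseteq> M1" "infinite M2"
    "\<forall>X. X \<subseteq> M2 \<and> finite X \<and> card X = k \<longrightarrow> Q v (sorted_list_of_set X) = t"
    by metis
  have sub: "incr_tuples M2 k \<subseteq> incr_tuples M1 k" using M2(1) unfolding incr_tuples_def by auto
  have Qt: "Q v a = t" if "a \<in> incr_tuples M2 k" for a
  proof -
    note st = sorted_list_of_set_tuple[OF that]
    have "set a \<subseteq> M2 \<and> finite (set a) \<and> card (set a) = k" using st(2,3,4) by simp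
    then have "Q v (sorted_list_of_set (set a)) = t" using M2(3) by simp
    then show ?thesis using st(1) by simp
  qed
  have "\<forall>u\<in>insert v F. \<forall>a\<in>incr_tuples M2 k. \<forall>b\<in>incr_tuples M2 k. Q u a = Q u b"
  proof (intro ballI)
    fix u a b assume u: "u \<in> insert v F" and a: "a \<in> incr_tuples M2 k" and b: "b \<in> incr_tuples M2 k"
    show "Q u a = Q u b"
    proof (cases "u = v")
      case True then show ?thesis using Qt a b by simp
    next
      case False then have "u \<in> F" using u by simp
      moreover have "a \<in> incr_tuples M1 k" "b \<in> incr_tuples M1 k" using sub a b by auto
      ultimately show ?thesis using M1(3) by blast
    qed
  qed
  moreover have "M2 \<subseteq> Z" using M1(1) M2(1) by blast
  ultimately show ?case using M2(2) by blast
qed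

lemma floor_close:
  fixes x y w :: real
  assumes "w > 0" "x \<ge> 0" "y \<ge> 0" "nat \<lfloor>x / w\<rfloor> = nat \<lfloor>y / w\<rfloor>"
  shows "\<bar>x - y\<bar> < w"
proof -
  have "x / w \<ge> 0" "y / w \<ge> 0" using assms(1,2,3) by simp_all
  then have "\<lfloor>x / w\<rfloor> \<ge> 0" "\<lfloor>y / w\<rfloor> \<ge> 0" by (simp_all only: zero_le_floor)
  then have eq: "\<lfloor>x / w\<rfloor> = \<lfloor>y / w\<rfloor>" using assms(4) by (metis eq_nat_nat_iff)
  define r where "r = real_of_int \<lfloor>y / w\<rfloor>"
  have A: "r \<le> x / w \<and> x / w < r + 1" unfolding r_def using eq floor_eq_iff by blast
  have B: "r \<le> y / w \<and> y / w < r + 1" unfolding r_def using floor_eq_iff by blast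
  have "x / w - y / w < 1" "y / w - x / w < 1" using A B by linarith+
  then have "(x - y) / w < 1" "(y - x) / w < 1" by (simp_all add: diff_divide_distrib)
  then have "x - y < w" "y - x < w" using assms(1) by (simp_all add: divide_less_eq)
  then show ?thesis by (simp add: abs_less_iff)
qed

lemma main_red:
  fixes f :: "nat list \<Rightarrow> 'a::real_normed_vector" and Y :: "'a set"
  assumes F: "finite F" and dec: "\<exists>C\<ge>0. \<forall>x. \<exists>c. x - (\<Sum>u\<in>F. c u *\<^sub>R u) \<in> Y \<and> (\<forall>u\<in>F. \<bar>c u\<bar> \<le> C * norm x)"
    and bnd: "bounded (f ` incr_tuples UNIV k)" and eta: "\<eta> > 0"
  shows "\<exists>e G. strict_mono e \<and> (\<forall>n. G n \<in> Y) \<and> bounded (G ` incr_tuples UNIV k) \<and>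
     (\<forall>n\<in>incr_tuples UNIV k. \<forall>m\<in>incr_tuples UNIV k.
        \<bar>dist (f (map e n)) (f (map e m)) - dist (G n) (G m)\<bar> \<le> \<eta>)"
proof -
  let ?T = "incr_tuples UNIV k"
  obtain C where C: "C \<ge> 0" "\<forall>x. \<exists>c. x - (\<Sum>u\<in>F. c u *\<^sub>R u) \<in> Y \<and> (\<forall>u\<in>F. \<bar>c u\<bar> \<le> C * norm x)"
    using dec by blast
  define cc where "cc x = (SOME c. x - (\<Sum>u\<in>F. c u *\<^sub>R u) \<in> Y \<and> (\<forall>u\<in>F. \<bar>c u\<bar> \<le> C * norm x))" for x
  have cc: "x - (\<Sum>u\<in>F. cc x u *\<^sub>R u) \<in> Y \<and> (\<forall>u\<in>F. \<bar>cc x u\<bar> \<le> C * norm x)" for x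
    unfolding cc_def using C(2)[rule_format, of x] by (rule someI_ex)
  obtain B where B: "\<forall>x\<in>f ` ?T. norm x \<le> B" using bnd bounded_iff by metis
  define B0 where "B0 = max B 0"
  have B0: "B0 \<ge> 0" "\<And>a. a \<in> ?T \<Longrightarrow> norm (f a) \<le> B0" using B unfolding B0_def by auto
  define R where "R = C * B0"
  have R: "R \<ge> 0" unfolding R_def using C(1) B0(1) by simp
  have ccR: "\<bar>cc (f a) u\<bar> \<le> R" if "a \<in> ?T" "u \<in> F" for a u
  proof -
    have "\<bar>cc (f a) u\<bar> \<le> C * norm (f a)" using cc that(2) by blast
    also have "\<dots> \<le> C * B0" using B0(2)[OF that(1)] C(1) by (simp add: mult_left_mono)
    finally show ?thesis unfolding R_def .
  qed
  define S where "S = (\<Sum>u\<in>F. norm u)"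
  have S: "S \<ge> 0" unfolding S_def by (simp add: sum_nonneg)
  define w where "w = \<eta> / (S + 1)"
  have w: "w > 0" unfolding w_def using eta S by simp
  have wS: "w * S \<le> \<eta>"
  proof -
    have "w * S = \<eta> * (S / (S + 1))" unfolding w_def by (simp add: field_simps)
    also have "\<dots> \<le> \<eta> * 1" using eta S by (intro mult_left_mono) auto
    finally show ?thesis by simp
  qed
  define Q where "Q u a = nat \<lfloor>(cc (f a) u + R) / w\<rfloor>" for u a
  define s where "s = Suc (nat \<lfloor>2 * R / w\<rfloor>)"
  have Qs: "\<forall>u\<in>F. \<forall>a\<in>?T. Q u a < s"
  proof (intro ballI)
    fix u a assume u: "u \<in> F" and a: "a \<in> ?T"
    have "(cc (f a) u + R) / w \<le> 2 * R / w" using ccR[OF a u] w by (intro divide_right_mono) auto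
    then have "\<lfloor>(cc (f a) u + R) / w\<rfloor> \<le> \<lfloor>2 * R / w\<rfloor>" by (rule floor_mono)
    then show "Q u a < s" unfolding Q_def s_def by linarith
  qed
  obtain M where M: "infinite M" "\<forall>u\<in>F. \<forall>a\<in>incr_tuples M k. \<forall>b\<in>incr_tuples M k. Q u a = Q u b"
    using ramsey_multi[OF F infinite_UNIV_nat Qs] by blast
  define e where "e = enumerate M"
  have e: "strict_mono e" "range e = M" unfolding e_def using M(1)
    by (auto simp: strict_mono_enumerate range_enumerate)
  define h where "h a = (\<Sum>u\<in>F. cc (f a) u *\<^sub>R u)" for a
  define G where "G n = f (map e n) - h (map e n)" for n
  have GY: "\<forall>n. G n \<in> Y" unfolding G_def h_def using cc by blast
  have hb: "norm (h a) \<le> R * S" if "a \<in> ?T" for a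
  proof -
    have "norm (h a) \<le> (\<Sum>u\<in>F. norm (cc (f a) u *\<^sub>R u))" unfolding h_def by (rule norm_sum)
    also have "\<dots> \<le> (\<Sum>u\<in>F. R * norm u)"
      using ccR[OF that] by (intro sum_mono) (simp add: mult_right_mono)
    also have "\<dots> = R * S" unfolding S_def by (simp add: sum_distrib_left)
    finally show ?thesis .
  qed
  have Gb: "bounded (G ` ?T)"
    unfolding bounded_iff
  proof (intro exI ballI)
    fix x assume "x \<in> G ` ?T"
    then obtain n where n: "n \<in> ?T" "x = G n" by blast
    have a: "map e n \<in> ?T" using incr_tuples_map_UNIV[OF e(1) n(1)] .
    have "norm x \<le> norm (f (map e n)) + norm (h (map e n))" unfolding n(2) G_def
      by (rule norm_triangle_ineq4)
    also have "\<dots> \<le> B0 + R * S" using B0(2)[OF a] hb[OF a] by simp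
    finally show "norm x \<le> B0 + R * S" .
  qed
  have close: "\<bar>dist (f (map e n)) (f (map e m)) - dist (G n) (G m)\<bar> \<le> \<eta>"
    if n: "n \<in> ?T" and m: "m \<in> ?T" for n m
  proof -
    define a where "a = map e n"
    define b where "b = map e m"
    have aM: "a \<in> incr_tuples M k" "b \<in> incr_tuples M k"
      using incr_tuples_map[OF e(1) n] incr_tuples_map[OF e(1) m] e(2) unfolding a_def b_def by auto
    have aT: "a \<in> ?T" "b \<in> ?T" using incr_tuples_map_UNIV[OF e(1)] n m unfolding a_def b_def by auto
    have cl: "\<bar>cc (f a) u - cc (f b) u\<bar> < w" if u: "u \<in> F" for u
    proof -
      have qe: "Q u a = Q u b" using M(2) u aM by blast
      have "\<bar>(cc (f a) u + R) - (cc (f b) u + R)\<bar> < w"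
      proof (rule floor_close[OF w])
        show "cc (f a) u + R \<ge> 0" using ccR[OF aT(1) u] by linarith
        show "cc (f b) u + R \<ge> 0" using ccR[OF aT(2) u] by linarith
        show "nat \<lfloor>(cc (f a) u + R) / w\<rfloor> = nat \<lfloor>(cc (f b) u + R) / w\<rfloor>"
          using qe unfolding Q_def .
      qed
      then show ?thesis by simp
    qed
    have "h a - h b = (\<Sum>u\<in>F. (cc (f a) u - cc (f b) u) *\<^sub>R u)"
      unfolding h_def by (simp add: sum_subtractf scaleR_diff_left)
    then have "norm (h a - h b) \<le> (\<Sum>u\<in>F. norm ((cc (f a) u - cc (f b) u) *\<^sub>R u))"
      using norm_sum by metis
    also have "\<dots> \<le> (\<Sum>u\<in>F. w * norm u)"
      using cl by (intro sum_mono) (simp add: mult_right_mono less_imp_le)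
    also have "\<dots> = w * S" unfolding S_def by (simp add: sum_distrib_left)
    finally have hab: "norm (h a - h b) \<le> \<eta>" using wS by simp
    have "\<bar>dist (f a) (f b) - dist (G n) (G m)\<bar> = \<bar>norm (f a - f b) - norm (G n - G m)\<bar>"
      by (simp add: dist_norm)
    also have "\<dots> \<le> norm ((f a - f b) - (G n - G m))" by (rule norm_triangle_ineq3)
    also have "(f a - f b) - (G n - G m) = h a - h b" unfolding G_def a_def b_def by simp
    finally show ?thesis using hab unfolding a_def b_def by simp
  qed
  show ?thesis
    apply (rule exI[of _ e], rule exI[of _ G])
    using e(1) GY Gb close by blast
qed

lemma choose_eta:
  fixes a :: "nat \<Rightarrow> real"
  assumes lam: "lam > 0" and p: "p > 1" and eps: "\<epsilon> > 0" and a: "\<forall>j<k. 0 \<le> a j"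
    and L: "(\<Sum>j<k. a j powr p) powr (1/p) > 0"
  shows "\<exists>\<eta>>0. lam * (\<Sum>j<k. (a j + \<eta>) powr p) powr (1/p) + \<eta> \<le> (lam + \<epsilon>) * (\<Sum>j<k. a j powr p) powr (1/p)"
proof -
  define L where "L = (\<Sum>j<k. a j powr p) powr (1/p)"
  have ev0: "eventually (\<lambda>t::real. t > 0) (at_right 0)"
    by (simp add: eventually_at_right_field) (meson zero_less_one)
  have evj: "eventually (\<lambda>t. a j + t \<ge> 0) (at_right 0)" if "j < k" for j
    using ev0 by eventually_elim (use a that in auto)
  have tj: "((\<lambda>t. (a j + t) powr p) \<longlongrightarrow> (a j + 0) powr p) (at_right 0)" if "j < k" for j
  proof (rule tendsto_powr')
    show "((\<lambda>t. a j + t) \<longlongrightarrow> a j + 0) (at_right 0)"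
      by (intro tendsto_add tendsto_const tendsto_ident_at)
  qed (use p evj[OF that] in auto)
  have ts: "((\<lambda>t. \<Sum>j<k. (a j + t) powr p) \<longlongrightarrow> (\<Sum>j<k. (a j + 0) powr p)) (at_right 0)"
    by (rule tendsto_sum) (use tj in auto)
  have evs: "eventually (\<lambda>t. (\<Sum>j<k. (a j + t) powr p) \<ge> 0) (at_right 0)"
    by (rule always_eventually) (simp add: sum_nonneg)
  have tp: "((\<lambda>t. (\<Sum>j<k. (a j + t) powr p) powr (1/p)) \<longlongrightarrow> (\<Sum>j<k. (a j + 0) powr p) powr (1/p)) (at_right 0)"
    by (rule tendsto_powr') (use p evs ts in \<open>auto intro!: tendsto_intros\<close>)
  have tf: "((\<lambda>t. lam * (\<Sum>j<k. (a j + t) powr p) powr (1/p) + t) \<longlongrightarrow> lam * L + 0) (at_right 0)"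
    unfolding L_def using tp by (intro tendsto_add tendsto_mult tendsto_const tendsto_ident_at) simp_all
  have "lam * L + 0 < (lam + \<epsilon>) * L" using L eps unfolding L_def by (simp add: algebra_simps)
  from order_tendstoD(2)[OF tf this]
  have "eventually (\<lambda>t. lam * (\<Sum>j<k. (a j + t) powr p) powr (1/p) + t < (lam + \<epsilon>) * L) (at_right 0)" .
  then obtain b where b: "b > 0" "\<forall>t>0. t < b \<longrightarrow> lam * (\<Sum>j<k. (a j + t) powr p) powr (1/p) + t < (lam + \<epsilon>) * L"
    unfolding eventually_at_right_field by auto
  have "lam * (\<Sum>j<k. (a j + b/2) powr p) powr (1/p) + b/2 < (lam + \<epsilon>) * L"
    using b by simp
  then show ?thesis unfolding L_def using b(1) by (intro exI[of _ "b/2"]) auto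
qed

lemma zero_case:
  fixes f :: "nat list \<Rightarrow> 'a::real_normed_vector"
  assumes bnd: "bounded (f ` incr_tuples UNIV k)" and p: "p > 1"
    and L: "\<not> (\<Sum>j<k. Lipj f k j powr p) powr (1/p) > 0"
    and n: "n \<in> incr_tuples UNIV k" and m: "m \<in> incr_tuples UNIV k"
  shows "dist (f n) (f m) \<le> c * (\<Sum>j<k. Lipj f k j powr p) powr (1/p)"
proof -
  have L0: "(\<Sum>j<k. Lipj f k j powr p) powr (1/p) = 0" using L powr_ge_zero[of "\<Sum>j<k. Lipj f k j powr p" "1/p"] by linarith
  then have S0: "(\<Sum>j<k. Lipj f k j powr p) = 0" by simp
  have "\<forall>j\<in>{..<k}. Lipj f k j powr p = 0"
    using S0 by (subst sum_nonneg_eq_0_iff[symmetric]) auto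
  then have "\<forall>j\<in>{..<k}. Lipj f k j = 0" by simp
  then have "(\<Sum>j<k. Lipj f k j) = 0" by simp
  then have "dist (f n) (f m) \<le> 0" using path_bound2[OF bnd n m] by simp
  then show ?thesis using L0 by simp
qed

lemma core:
  fixes Y :: "'a::real_normed_vector set" and f :: "nat list \<Rightarrow> 'a"
  assumes F: "finite F" and dec: "\<exists>C\<ge>0. \<forall>x. \<exists>c. x - (\<Sum>u\<in>F. c u *\<^sub>R u) \<in> Y \<and> (\<forall>u\<in>F. \<bar>c u\<bar> \<le> C * norm x)"
    and lam: "lam > 0" and p: "p > 1" and eps: "\<epsilon> > 0"
    and bnd: "bounded (f ` incr_tuples UNIV k)"
    and L: "(\<Sum>j<k. Lipj f k j powr p) powr (1/p) > 0"
  shows "\<exists>e G. strict_mono e \<and> (\<forall>n. G n \<in> Y) \<and> bounded (G ` incr_tuples UNIV k) \<and>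
     (\<forall>n\<in>incr_tuples UNIV k. \<forall>m\<in>incr_tuples UNIV k.
        dist (G n) (G m) \<le> lam * (\<Sum>j<k. Lipj G k j powr p) powr (1/p) \<longrightarrow>
        dist (f (map e n)) (f (map e m)) \<le> (lam + \<epsilon>) * (\<Sum>j<k. Lipj f k j powr p) powr (1/p))"
proof -
  let ?T = "incr_tuples UNIV k"
  have a: "\<forall>j<k. 0 \<le> Lipj f k j" using Lip_nonneg[OF bnd] by blast
  obtain \<eta> where eta: "\<eta> > 0"
    "lam * (\<Sum>j<k. (Lipj f k j + \<eta>) powr p) powr (1/p) + \<eta> \<le> (lam + \<epsilon>) * (\<Sum>j<k. Lipj f k j powr p) powr (1/p)"
    using choose_eta[OF lam p eps a L] by blast
  obtain e G where eG: "strict_mono e" "\<forall>n. G n \<in> Y" "bounded (G ` ?T)"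
    "\<forall>n\<in>?T. \<forall>m\<in>?T. \<bar>dist (f (map e n)) (f (map e m)) - dist (G n) (G m)\<bar> \<le> \<eta>"
    using main_red[OF F dec bnd eta(1)] by blast
  have lipG: "Lipj G k j \<le> Lipj f k j + \<eta>" if j: "j < k" for j
  proof (rule Lip_le[OF j])
    fix a b assume ab: "(a, b) \<in> Hpairs UNIV k j"
    then have aT: "a \<in> ?T" "b \<in> ?T" unfolding Hpairs_def by auto
    have "dist (G a) (G b) \<le> dist (f (map e a)) (f (map e b)) + \<eta>" using eG(4) aT by fastforce
    also have "dist (f (map e a)) (f (map e b)) \<le> Lipj f k j"
      by (rule Lip_upper[OF bnd Hpairs_map[OF eG(1) ab j]])
    finally show "dist (G a) (G b) \<le> Lipj f k j + \<eta>" by simp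
  qed
  have "(\<Sum>j<k. Lipj G k j powr p) \<le> (\<Sum>j<k. (Lipj f k j + \<eta>) powr p)"
  proof (rule sum_mono)
    fix j assume "j \<in> {..<k}"
    then have j: "j < k" by simp
    show "Lipj G k j powr p \<le> (Lipj f k j + \<eta>) powr p"
      using Lip_nonneg[OF eG(3) j] lipG[OF j] p by (intro powr_mono2) auto
  qed
  then have LG: "(\<Sum>j<k. Lipj G k j powr p) powr (1/p) \<le> (\<Sum>j<k. (Lipj f k j + \<eta>) powr p) powr (1/p)"
    using p by (intro powr_mono2) (auto intro: sum_nonneg)
  have "dist (f (map e n)) (f (map e m)) \<le> (lam + \<epsilon>) * (\<Sum>j<k. Lipj f k j powr p) powr (1/p)"
    if n: "n \<in> ?T" and m: "m \<in> ?T" and d: "dist (G n) (G m) \<le> lam * (\<Sum>j<k. Lipj G k j powr p) powr (1/p)" for n m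
  proof -
    have "dist (f (map e n)) (f (map e m)) \<le> dist (G n) (G m) + \<eta>" using eG(4) n m by fastforce
    also have "\<dots> \<le> lam * (\<Sum>j<k. Lipj G k j powr p) powr (1/p) + \<eta>" using d by simp
    also have "\<dots> \<le> lam * (\<Sum>j<k. (Lipj f k j + \<eta>) powr p) powr (1/p) + \<eta>"
      using LG lam by simp
    also have "\<dots> \<le> (lam + \<epsilon>) * (\<Sum>j<k. Lipj f k j powr p) powr (1/p)" by (rule eta(2))
    finally show ?thesis .
  qed
  then show ?thesis using eG(1,2,3) by blast
qed

lemma infinite_image_mono:
  assumes "strict_mono (e::nat \<Rightarrow> nat)" "infinite M"
  shows "infinite (e ` M)"
  using assms finite_imageD strict_mono_imp_inj_on inj_on_subset by (metis subset_UNIV)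

theorem lemma4p1:
  fixes Y :: "'a::banach set" and lam p :: real
  assumes "lam > 0" and "p > 1"
    and "subspace Y" and "closed Y"
    and "\<exists>F. finite F \<and> span (Y \<union> F) = UNIV"
  shows "(HFC lam p Y \<longrightarrow> (\<forall>\<epsilon>>0. HFC (lam + \<epsilon>) p (UNIV :: 'a set))) \<and>
         (HIC lam p Y \<longrightarrow> (\<forall>\<epsilon>>0. HIC (lam + \<epsilon>) p (UNIV :: 'a set)))"
proof -
  obtain F where F: "finite F" "span (Y \<union> F) = UNIV" using assms(5) by blast
  have dec: "\<exists>C\<ge>0. \<forall>x. \<exists>c. x - (\<Sum>u\<in>F. c u *\<^sub>R u) \<in> Y \<and> (\<forall>u\<in>F. \<bar>c u\<bar> \<le> C * norm x)"
    by (rule decomp[OF F(1) assms(3,4) F(2)])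
  show ?thesis
  proof (intro conjI impI allI)
    fix \<epsilon> :: real assume H: "HFC lam p Y" and eps: "\<epsilon> > 0"
    show "HFC (lam + \<epsilon>) p (UNIV :: 'a set)"
      unfolding HFC_def
    proof (intro allI impI, elim conjE)
      fix k and f :: "nat list \<Rightarrow> 'a"
      assume bnd: "bounded (f ` incr_tuples UNIV k)"
      let ?L = "(\<Sum>j<k. Lipj f k j powr p) powr (1/p)"
      show "\<exists>M. infinite M \<and> (\<forall>n\<in>incr_tuples M k. \<forall>m\<in>incr_tuples M k. dist (f n) (f m) \<le> (lam + \<epsilon>) * ?L)"
      proof (cases "?L > 0")
        case False
        have "\<forall>n\<in>incr_tuples UNIV k. \<forall>m\<in>incr_tuples UNIV k. dist (f n) (f m) \<le> (lam + \<epsilon>) * ?L"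
          using zero_case[OF bnd assms(2) False] by blast
        then show ?thesis by (intro exI[of _ UNIV]) auto
      next
        case True
        obtain e G where eG: "strict_mono e" "\<forall>n. G n \<in> Y" "bounded (G ` incr_tuples UNIV k)"
          "\<forall>n\<in>incr_tuples UNIV k. \<forall>m\<in>incr_tuples UNIV k.
            dist (G n) (G m) \<le> lam * (\<Sum>j<k. Lipj G k j powr p) powr (1/p) \<longrightarrow>
            dist (f (map e n)) (f (map e m)) \<le> (lam + \<epsilon>) * ?L"
          using core[OF F(1) dec assms(1,2) eps bnd True] by blast
        have "G ` incr_tuples UNIV k \<subseteq> Y" using eG(2) by blast
        then obtain M' where M': "infinite M'" "\<forall>n\<in>incr_tuples M' k. \<forall>m\<in>incr_tuples M' k.
            dist (G n) (G m) \<le> lam * (\<Sum>j<k. Lipj G k j powr p) powr (1/p)"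
          using H eG(3) unfolding HFC_def by blast
        have "\<forall>n\<in>incr_tuples (e ` M') k. \<forall>m\<in>incr_tuples (e ` M') k. dist (f n) (f m) \<le> (lam + \<epsilon>) * ?L"
        proof (intro ballI)
          fix n m assume n: "n \<in> incr_tuples (e ` M') k" and m: "m \<in> incr_tuples (e ` M') k"
          obtain n' where n': "n = map e n'" "n' \<in> incr_tuples M' k" using incr_tuples_pre[OF eG(1) n] by blast
          obtain m' where m': "m = map e m'" "m' \<in> incr_tuples M' k" using incr_tuples_pre[OF eG(1) m] by blast
          have T: "n' \<in> incr_tuples UNIV k" "m' \<in> incr_tuples UNIV k" using n'(2) m'(2) unfolding incr_tuples_def by auto
          have "dist (G n') (G m') \<le> lam * (\<Sum>j<k. Lipj G k j powr p) powr (1/p)" using M'(2) n'(2) m'(2) by blast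
          then show "dist (f n) (f m) \<le> (lam + \<epsilon>) * ?L" using eG(4) T n'(1) m'(1) by blast
        qed
        then show ?thesis using infinite_image_mono[OF eG(1) M'(1)] by blast
      qed
    qed
  next
    fix \<epsilon> :: real assume H: "HIC lam p Y" and eps: "\<epsilon> > 0"
    show "HIC (lam + \<epsilon>) p (UNIV :: 'a set)"
      unfolding HIC_def
    proof (intro allI impI, elim conjE)
      fix k and f :: "nat list \<Rightarrow> 'a"
      assume bnd: "bounded (f ` incr_tuples UNIV k)"
      let ?L = "(\<Sum>j<k. Lipj f k j powr p) powr (1/p)"
      show "\<exists>M. infinite M \<and> (\<forall>(n, m)\<in>interlaced M k. dist (f n) (f m) \<le> (lam + \<epsilon>) * ?L)"
      proof (cases "?L > 0")
        case False
        have "\<forall>(n, m)\<in>interlaced UNIV k. dist (f n) (f m) \<le> (lam + \<epsilon>) * ?L"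
          using zero_case[OF bnd assms(2) False] unfolding interlaced_def by blast
        then show ?thesis by (intro exI[of _ UNIV]) auto
      next
        case True
        obtain e G where eG: "strict_mono e" "\<forall>n. G n \<in> Y" "bounded (G ` incr_tuples UNIV k)"
          "\<forall>n\<in>incr_tuples UNIV k. \<forall>m\<in>incr_tuples UNIV k.
            dist (G n) (G m) \<le> lam * (\<Sum>j<k. Lipj G k j powr p) powr (1/p) \<longrightarrow>
            dist (f (map e n)) (f (map e m)) \<le> (lam + \<epsilon>) * ?L"
          using core[OF F(1) dec assms(1,2) eps bnd True] by blast
        have "G ` incr_tuples UNIV k \<subseteq> Y" using eG(2) by blast
        then obtain M' where M': "infinite M'" "\<forall>(n, m)\<in>interlaced M' k.
            dist (G n) (G m) \<le> lam * (\<Sum>j<k. Lipj G k j powr p) powr (1/p)"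
          using H eG(3) unfolding HIC_def by blast
        have "\<forall>(n, m)\<in>interlaced (e ` M') k. dist (f n) (f m) \<le> (lam + \<epsilon>) * ?L"
        proof (intro ballI, clarify)
          fix n m assume nm: "(n, m) \<in> interlaced (e ` M') k"
          obtain n' m' where nm': "n = map e n'" "m = map e m'" "(n', m') \<in> interlaced M' k"
            using interlaced_pre[OF eG(1) nm] by blast
          have T: "n' \<in> incr_tuples UNIV k" "m' \<in> incr_tuples UNIV k" using nm'(3)
            unfolding interlaced_def incr_tuples_def by auto
          have "dist (G n') (G m') \<le> lam * (\<Sum>j<k. Lipj G k j powr p) powr (1/p)" using M'(2) nm'(3) by blast
          then show "dist (f n) (f m) \<le> (lam + \<epsilon>) * ?L" using eG(4) T nm'(1,2) by blast
        qed
        then show ?thesis using infinite_image_mono[OF eG(1) M'(1)] by blast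
      qed
    qed
  qed
qed

end
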